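(* Let $\mathcal{M}\subseteq 2^N$ be a matroid on $N=[n]$. Let the elements have distinct nonnegative weights with $w(\{1\})>\dots>w(\{n\})$. Let $k$ satisfy the standing assumptions below, and let $p\in[\varepsilon(k),1/2]$. Let $X_1,\dots,X_n\sim\mathrm{Ber}(2p)$ and $Y_1,\dots,Y_n\sim\mathrm{Ber}(1/2)$ be mutually independent. Set $S=\{i:X_i=1,Y_i=1\}$ and $S^+=S\cap\mathrm{OPT}(N,\mathcal{M}^k)$. Then \[ \Pr\bigl[\varphi(S^+,\mathcal{M})\ge(1+\varepsilon(pk))pk\bigr]\le 1/n^3 . \]
   Context: Matroids are identified with their families of independent sets. $\mathcal{M}^k$ is the $k$-fold union of $\mathcal{M}$: the family of sets partitionable into $k$ members of $\mathcal{M}$. $\mathrm{OPT}(N,\mathcal{M}^k)$ is the maximum-weight set in $\mathcal{M}^k$, where the weight of a set is the sum of its elements' weights; it is unique since weights are distinct. The covering number $\varphi(S,\mathcal{M})$ is the least $r\in\mathbb{N}$ such that $S$ can be partitioned into $r$ members of $\mathcal{M}$. Standing assumptions: $\varepsilon(x)=C\sqrt{\log(n)/x}$, where $C$ is a sufficiently large absolute constant (e.g. $C\in[10,20]$, such that $\log(1/\varepsilon(k))-2$ is a positive integer), and $160^2\log n\le k\le n$. *)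

theory Defs
  imports "HOL-Probability.Probability"
begin

text \<open>A matroid on the ground set N, identified with its family of independent sets.\<close>
definition matroid :: "'a set \<Rightarrow> 'a set set \<Rightarrow> bool" where
  "matroid N M \<longleftrightarrow>
     (\<forall>I\<in>M. I \<subseteq> N) \<and> {} \<in> M \<and>
     (\<forall>I J. J \<in> M \<longrightarrow> I \<subseteq> J \<longrightarrow> I \<in> M) \<and>
     (\<forall>I\<in>M. \<forall>J\<in>M. card I < card J \<longrightarrow> (\<exists>x\<in>J - I. insert x I \<in> M))"

definition partitionable :: "'a set set \<Rightarrow> nat \<Rightarrow> 'a set \<Rightarrow> bool" where
  "partitionable M r S \<longleftrightarrow>
     (\<exists>P :: nat \<Rightarrow> 'a set. (\<forall>i<r. P i \<in> M) \<and>
        (\<forall>i<r. \<forall>j<r. i \<noteq> j \<longrightarrow> P i \<inter> P j = {}) \<and>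
        (\<Union>i<r. P i) = S)"

definition kunion :: "'a set set \<Rightarrow> nat \<Rightarrow> 'a set set" where
  "kunion M k = {S. partitionable M k S}"

definition set_weight :: "('a \<Rightarrow> real) \<Rightarrow> 'a set \<Rightarrow> real" where
  "set_weight w S = (\<Sum>x\<in>S. w x)"

text \<open>OPT(N, F): the maximum-weight set of F; among maximum-weight sets we take the
  inclusion-maximal one (this only matters if some weight is 0).\<close>
definition OPT :: "('a \<Rightarrow> real) \<Rightarrow> 'a set set \<Rightarrow> 'a set" where
  "OPT w F = (THE S. S \<in> F \<and> (\<forall>T\<in>F. set_weight w T \<le> set_weight w S) \<and>
                    (\<forall>T\<in>F. S \<subseteq> T \<longrightarrow> T = S))"

definition covering_number :: "'a set \<Rightarrow> 'a set set \<Rightarrow> nat" where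
  "covering_number S M = (LEAST r. partitionable M r S)"

definition eps :: "real \<Rightarrow> nat \<Rightarrow> real \<Rightarrow> real" where
  "eps C n x = C * sqrt (ln (real n) / x)"

end

theory Submission
  imports Defs
begin


definition kpart :: "'a set set \<Rightarrow> nat \<Rightarrow> (nat \<Rightarrow> 'a set) \<Rightarrow> 'a set \<Rightarrow> bool" where
  "kpart M r P S \<longleftrightarrow> (\<forall>i<r. P i \<in> M) \<and>
        (\<forall>i<r. \<forall>j<r. i \<noteq> j \<longrightarrow> P i \<inter> P j = {}) \<and> (\<Union>i<r. P i) = S"

lemma partitionable_part: "partitionable M r S \<longleftrightarrow> (\<exists>P. kpart M r P S)"
  unfolding partitionable_def kpart_def by blast

definition edge :: "'a set set \<Rightarrow> nat \<Rightarrow> (nat \<Rightarrow> 'a set) \<Rightarrow> 'a \<Rightarrow> 'a \<Rightarrow> bool" where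
  "edge M r P y z \<longleftrightarrow> (\<exists>j<r. z \<in> P j \<and> y \<notin> P j \<and> insert y (P j - {z}) \<in> M)"

definition augm :: "'a set set \<Rightarrow> nat \<Rightarrow> (nat \<Rightarrow> 'a set) \<Rightarrow> 'a \<Rightarrow> bool" where
  "augm M r P y \<longleftrightarrow> (\<exists>j<r. y \<notin> P j \<and> insert y (P j) \<in> M)"

lemma matroid_sub: "matroid N M \<Longrightarrow> J \<in> M \<Longrightarrow> I \<subseteq> J \<Longrightarrow> I \<in> M"
  unfolding matroid_def by blast

lemma matroid_fin: "matroid N M \<Longrightarrow> finite N \<Longrightarrow> I \<in> M \<Longrightarrow> finite I"
  unfolding matroid_def by (meson finite_subset)

lemma matroid_aug: "matroid N M \<Longrightarrow> I \<in> M \<Longrightarrow> J \<in> M \<Longrightarrow> card I < card J \<Longrightarrow> \<exists>x\<in>J - I. insert x I \<in> M"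
  unfolding matroid_def by blast

lemma two_aug:
  assumes mat: "matroid N M" and fin: "finite N" and P: "P \<in> M" and y: "y \<notin> P" "insert y P \<notin> M"
    and b: "b \<in> P" "insert y (P - {b}) \<in> M" and a: "a \<notin> P" "insert a P \<in> M" "a \<noteq> y"
  shows "insert a (insert y (P - {b})) \<in> M"
proof -
  have fP: "finite P" using matroid_fin[OF mat fin P] .
  have c1: "card (insert y (P - {b})) = card P" using fP b y
    by (simp add: card_Diff_singleton_if) (metis Suc_pred card_gt_0_iff empty_iff)
  have c2: "card (insert a P) = Suc (card P)" using fP a by simp
  obtain z where z: "z \<in> insert a P - insert y (P - {b})" "insert z (insert y (P - {b})) \<in> M"
    using matroid_aug[OF mat b(2) a(2)] c1 c2 by auto
  have "z = a \<or> z = b" using z(1) by auto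
  moreover have "insert b (insert y (P - {b})) = insert y P" using b by auto
  ultimately show ?thesis using z y by auto
qed

lemma extend:
  assumes mat: "matroid N M" and fin: "finite N"
  shows "A \<in> M \<Longrightarrow> Q \<in> M \<Longrightarrow> card A \<le> card Q \<Longrightarrow> \<exists>B\<in>M. A \<subseteq> B \<and> B \<subseteq> A \<union> Q \<and> card B = card Q"
proof (induction "card Q - card A" arbitrary: A)
  case 0
  then show ?case by auto
next
  case (Suc d)
  then obtain x where x: "x \<in> Q - A" "insert x A \<in> M" using matroid_aug[OF mat] by (metis zero_less_Suc zero_less_diff)
  have "finite A" using matroid_fin[OF mat fin Suc(3)] .
  then have "card (insert x A) = Suc (card A)" using x by simp
  then obtain B where "B \<in> M" "insert x A \<subseteq> B" "B \<subseteq> insert x A \<union> Q" "card B = card Q"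
    using Suc(1)[of "insert x A"] Suc(2,4,5) x by force
  then show ?case using x by (intro bexI[of _ B]) auto
qed

lemma cl_card:
  assumes mat: "matroid N M" and fin: "finite N" and J: "J \<in> M" and I: "I \<in> M"
    and sub: "\<And>z. z \<in> I \<Longrightarrow> z \<in> J \<or> insert z J \<notin> M"
  shows "card I \<le> card J"
proof (rule ccontr)
  assume "\<not> ?thesis"
  then obtain x where "x \<in> I - J" "insert x J \<in> M" using matroid_aug[OF mat J I] by auto
  then show False using sub by auto
qed

lemma aug_path:
  assumes mat: "matroid N M" and fin: "finite N"
  shows "kpart M r P I \<Longrightarrow> x \<notin> I \<Longrightarrow> ys 0 = x \<Longrightarrow> (\<forall>i<m. edge M r P (ys i) (ys (Suc i)))
     \<Longrightarrow> augm M r P (ys m) \<Longrightarrow> partitionable M r (insert x I)"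
proof (induction m arbitrary: P ys rule: less_induct)
  case (less m)
  show ?case
  proof (cases "\<exists>i<m. augm M r P (ys i)")
    case True
    then obtain i where "i < m" "augm M r P (ys i)" by blast
    then show ?thesis using less by auto
  next
    case False
    note noaug = False
    show ?thesis
    proof (cases m)
      case 0
      then obtain j where j: "j < r" "x \<notin> P j" "insert x (P j) \<in> M"
        using less(4,6) unfolding augm_def by auto
      define P' where "P' = P(j := insert x (P j))"
      have "kpart M r P' (insert x I)"
        using less(2,3) j unfolding kpart_def P'_def by (auto split: if_splits)
      then show ?thesis unfolding partitionable_part by blast
    next
      case (Suc m0)
      obtain js where js: "js < r" "ys m \<notin> P js" "insert (ys m) (P js) \<in> M"
        using less(6) unfolding augm_def by auto
      obtain j' where j': "j' < r" "ys m \<in> P j'" "ys m0 \<notin> P j'" "insert (ys m0) (P j' - {ys m}) \<in> M"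
        using less(5) Suc unfolding edge_def by auto
      have jne: "j' \<noteq> js" using js j' by auto
      define P' where "P' = P(j' := P j' - {ys m}, js := insert (ys m) (P js))"
      have ymI: "ys m \<in> I" using less(2) j' unfolding kpart_def by auto
      have disj: "\<forall>i<r. \<forall>j<r. i \<noteq> j \<longrightarrow> P' i \<inter> P' j = {}"
      proof (intro allI impI)
        fix i j assume ij: "i < r" "j < r" "i \<noteq> j"
        have a: "z \<in> P' l \<Longrightarrow> z \<noteq> ys m \<Longrightarrow> z \<in> P l" for z l
          unfolding P'_def by (auto split: if_splits)
        have b: "ys m \<in> P' l \<Longrightarrow> l < r \<Longrightarrow> l = js" for l
        proof (rule ccontr)
          assume "ys m \<in> P' l" "l < r" "l \<noteq> js"
          then have "ys m \<in> P l" "l \<noteq> j'" unfolding P'_def by (auto split: if_splits)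
          then show False using less(2) \<open>l < r\<close> j' unfolding kpart_def by blast
        qed
        have "P i \<inter> P j = {}" using less(2) ij unfolding kpart_def by auto
        then show "P' i \<inter> P' j = {}" using a b ij by blast
      qed
      have partP': "kpart M r P' I"
        unfolding kpart_def
      proof (intro conjI disj)
        show "\<forall>i<r. P' i \<in> M"
          using less(2) js j' unfolding kpart_def P'_def by (auto intro: matroid_sub[OF mat])
        show "(\<Union>i<r. P' i) = I"
          using less(2) js j' ymI jne unfolding kpart_def P'_def by (auto split: if_splits)
      qed
      have ne: "ys i \<noteq> ys m" if "i < m" for i using noaug that less(6) by auto
      have edges: "\<forall>i<m0. edge M r P' (ys i) (ys (Suc i))"
      proof (intro allI impI)
        fix i assume i: "i < m0"
        have "edge M r P (ys i) (ys (Suc i))" using less(5) Suc i by auto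
        then obtain j where j: "j < r" "ys (Suc i) \<in> P j" "ys i \<notin> P j" "insert (ys i) (P j - {ys (Suc i)}) \<in> M"
          unfolding edge_def by blast
        have n1: "ys i \<noteq> ys m" using ne i Suc by auto
        have n2: "ys (Suc i) \<noteq> ys m" using ne i Suc by auto
        have na: "insert (ys i) (P j) \<notin> M" using noaug i Suc j unfolding augm_def by (meson less_SucI)
        show "edge M r P' (ys i) (ys (Suc i))"
          unfolding edge_def
        proof (intro exI[of _ j] conjI)
          show "j < r" by fact
          show "ys (Suc i) \<in> P' j" using j n2 unfolding P'_def by auto
          show "ys i \<notin> P' j" using j n1 unfolding P'_def by auto
          show "insert (ys i) (P' j - {ys (Suc i)}) \<in> M"
          proof (cases "j = js")
            case True
            have "insert (ys m) (insert (ys i) (P j - {ys (Suc i)})) \<in> M"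
              using two_aug[OF mat fin _ j(3) na j(2) j(4)] js True n1 less(2) j(1)
              unfolding kpart_def by auto
            moreover have "insert (ys i) (P' j - {ys (Suc i)}) = insert (ys m) (insert (ys i) (P j - {ys (Suc i)}))"
              using True n2 unfolding P'_def by auto
            ultimately show ?thesis by simp
          next
            case False
            show ?thesis
            proof (cases "j = j'")
              case True
              then show ?thesis using False j(4) unfolding P'_def
                by (auto intro: matroid_sub[OF mat])
            next
              case False2: False
              then show ?thesis using False j(4) unfolding P'_def by auto
            qed
          qed
        qed
      qed
      have "augm M r P' (ys m0)"
        unfolding augm_def P'_def using j' jne by (intro exI[of _ j']) auto
      then show ?thesis using less(1)[of m0 P' ys] Suc partP' less(3,4) edges by auto
    qed
  qed
qed


lemma reach:
  assumes mat: "matroid N M" and fin: "finite N" and P: "kpart M r P I"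
    and XI: "X \<inter> I = {}" and np: "\<forall>x\<in>X. \<not> partitionable M r (insert x I)"
    and T: "T = {z. \<exists>x\<in>X. \<exists>m ys. ys 0 = x \<and> (\<forall>i<m. edge M r P (ys i) (ys (Suc i))) \<and> ys m = z}"
  shows "X \<subseteq> T" "T \<subseteq> X \<union> I" "\<forall>j<r. \<forall>z\<in>T. z \<in> P j \<or> insert z (P j \<inter> T) \<notin> M"
proof -
  show "X \<subseteq> T" unfolding T
  proof
    fix x assume "x \<in> X" then show "x \<in> {z. \<exists>x\<in>X. \<exists>m ys. ys 0 = x \<and> (\<forall>i<m. edge M r P (ys i) (ys (Suc i))) \<and> ys m = z}"
      by (intro CollectI bexI[of _ x] exI[of _ 0] exI[of _ "\<lambda>_. x"]) auto
  qed
  show "T \<subseteq> X \<union> I"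
  proof
    fix z assume "z \<in> T"
    then obtain x m ys where x: "x \<in> X" "ys 0 = x" "\<forall>i<m. edge M r P (ys i) (ys (Suc i))" "ys m = z"
      unfolding T by blast
    show "z \<in> X \<union> I"
    proof (cases m)
      case 0 then show ?thesis using x by auto
    next
      case (Suc m0)
      then have "edge M r P (ys m0) (ys m)" using x by auto
      then show ?thesis using P x(4) unfolding edge_def kpart_def by auto
    qed
  qed
  have noaug: "\<not> augm M r P z" if "z \<in> T" for z
  proof
    assume a: "augm M r P z"
    obtain x m ys where x: "x \<in> X" "ys 0 = x" "\<forall>i<m. edge M r P (ys i) (ys (Suc i))" "ys m = z"
      using \<open>z \<in> T\<close> unfolding T by blast
    have "partitionable M r (insert x I)"
      using aug_path[OF mat fin P _ x(2) x(3)] a x XI by auto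
    then show False using np x by auto
  qed
  have closed: "w \<in> T" if "z \<in> T" "edge M r P z w" for z w
  proof -
    obtain x m ys where x: "x \<in> X" "ys 0 = x" "\<forall>i<m. edge M r P (ys i) (ys (Suc i))" "ys m = z"
      using \<open>z \<in> T\<close> unfolding T by blast
    define ys' where "ys' = ys(Suc m := w)"
    have "ys' 0 = x" "\<forall>i<Suc m. edge M r P (ys' i) (ys' (Suc i))" "ys' (Suc m) = w"
      using x that(2) unfolding ys'_def by (auto simp: less_Suc_eq)
    then show ?thesis unfolding T using x(1) by blast
  qed
  show "\<forall>j<r. \<forall>z\<in>T. z \<in> P j \<or> insert z (P j \<inter> T) \<notin> M"
  proof (intro allI impI ballI)
    fix j z assume j: "j < r" and z: "z \<in> T"
    show "z \<in> P j \<or> insert z (P j \<inter> T) \<notin> M"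
    proof (rule ccontr)
      assume "\<not> ?thesis"
      then have zP: "z \<notin> P j" and A: "insert z (P j \<inter> T) \<in> M" by auto
      have PjM: "P j \<in> M" using P j unfolding kpart_def by auto
      have fPj: "finite (P j)" using matroid_fin[OF mat fin PjM] .
      have na: "insert z (P j) \<notin> M" using noaug[OF z] zP j unfolding augm_def by auto
      have "\<not> P j \<subseteq> T"
      proof
        assume "P j \<subseteq> T" then have "P j \<inter> T = P j" by auto
        then show False using A na by simp
      qed
      then have "card (P j \<inter> T) < card (P j)" using fPj by (meson Int_lower1 inf.absorb_iff1 psubsetI psubset_card_mono)
      then have "card (insert z (P j \<inter> T)) \<le> card (P j)" using fPj zP by simp
      then obtain B where B: "B \<in> M" "insert z (P j \<inter> T) \<subseteq> B" "B \<subseteq> insert z (P j \<inter> T) \<union> P j" "card B = card (P j)"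
        using extend[OF mat fin A PjM] by blast
      have "card (insert z (P j)) = Suc (card (P j))" using fPj zP by simp
      then have "\<not> insert z (P j) \<subseteq> B" using B(4) fPj
        by (metis B(1) card_mono finite_insert lessI matroid_fin[OF mat fin] not_le)
      then obtain w where w: "w \<in> insert z (P j)" "w \<notin> B" by blast
      have wz: "w \<noteq> z" using w B(2) by auto
      have wP: "w \<in> P j" using w wz by auto
      have wT: "w \<notin> T" using w B(2) wP by auto
      have "B \<subseteq> insert z (P j - {w})" using B(3) w(2) by auto
      moreover have "card (insert z (P j - {w})) = card (P j)"
        using fPj zP wP by (simp add: card_Diff_singleton_if) (metis Suc_pred card_gt_0_iff empty_iff)
      ultimately have "B = insert z (P j - {w})" using B(4) fPj by (intro card_subset_eq) auto
      then have "edge M r P z w" unfolding edge_def using j wP zP B(1) by auto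
      then show False using closed[OF z] wT by auto
    qed
  qed
qed


lemma part_fin: "matroid N M \<Longrightarrow> finite N \<Longrightarrow> kpart M r P I \<Longrightarrow> finite I"
  unfolding kpart_def using matroid_fin by (metis finite_UN finite_lessThan lessThan_iff)

lemma part_card:
  assumes mat: "matroid N M" and fin: "finite N" and P: "kpart M r P I"
  shows "card (I \<inter> T) = (\<Sum>j<r. card (P j \<inter> T))"
proof -
  have "I \<inter> T = (\<Union>j<r. P j \<inter> T)" using P unfolding kpart_def by auto
  moreover have "card (\<Union>j<r. P j \<inter> T) = (\<Sum>j<r. card (P j \<inter> T))"
    using P matroid_fin[OF mat fin] unfolding kpart_def
    by (intro card_UN_disjoint) (auto, blast)
  ultimately show ?thesis by simp
qed

lemma part_card_le:
  assumes P: "kpart M r P I"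
  shows "card (I \<inter> T) \<le> (\<Sum>j<r. card (P j \<inter> T))"
proof -
  have "I \<inter> T = (\<Union>j<r. P j \<inter> T)" using P unfolding kpart_def by auto
  then show ?thesis using card_UN_le[of "{..<r}" "\<lambda>j. P j \<inter> T"] by simp
qed

lemma covering:
  assumes mat: "matroid N M" and fin: "finite N" and SN: "S \<subseteq> N"
    and np: "\<not> partitionable M r S" and r: "r \<ge> 1"
  shows "\<exists>T J. T \<subseteq> S \<and> T \<noteq> {} \<and> J \<in> M \<and> (\<forall>z\<in>T. z \<in> J \<or> insert z J \<notin> M) \<and> card T > r * card J"
proof -
  have fS: "finite S" using SN fin finite_subset by auto
  define F where "F = {I. I \<subseteq> S \<and> partitionable M r I}"
  have fF: "finite F" unfolding F_def using fS by auto
  have "{} \<in> M" using mat unfolding matroid_def by auto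
  then have "{} \<in> F" unfolding F_def partitionable_def by (intro CollectI conjI exI[of _ "\<lambda>_. {}"]) auto
  then have neF: "card ` F \<noteq> {}" by auto
  obtain I where IF: "I \<in> F" "card I = Max (card ` F)"
    using Max_in[OF finite_imageI[OF fF] neF] by auto
  have maxI: "card I' \<le> card I" if "I' \<in> F" for I' using IF(2) fF that by simp
  have IS: "I \<subseteq> S" using IF unfolding F_def by auto
  have "I \<noteq> S" using IF np unfolding F_def by auto
  then obtain x where x: "x \<in> S" "x \<notin> I" using IS by blast
  have fI: "finite I" using IS fS finite_subset by auto
  have npx: "\<not> partitionable M r (insert x I)"
  proof
    assume "partitionable M r (insert x I)"
    then have "insert x I \<in> F" unfolding F_def using x IS by auto
    then show False using maxI[of "insert x I"] x fI by simp
  qed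
  obtain P where P: "kpart M r P I" using IF unfolding F_def partitionable_part by auto
  define T where "T = {z. \<exists>x\<in>{x}. \<exists>m ys. ys 0 = x \<and> (\<forall>i<m. edge M r P (ys i) (ys (Suc i))) \<and> ys m = z}"
  note R = reach[OF mat fin P _ _ T_def]
  have R1: "x \<in> T" and R2: "T \<subseteq> insert x I" and R3: "\<forall>j<r. \<forall>z\<in>T. z \<in> P j \<or> insert z (P j \<inter> T) \<notin> M"
    using R[of] x npx by auto
  define J where "J = P 0 \<inter> T"
  have JM: "J \<in> M" using P r unfolding J_def kpart_def by (auto intro: matroid_sub[OF mat])
  have TS: "T \<subseteq> S" using R2 IS x by auto
  have fT: "finite T" using TS fS finite_subset by auto
  have Tcl: "\<forall>z\<in>T. z \<in> J \<or> insert z J \<notin> M" using R3 r unfolding J_def by auto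
  have "card J \<le> card (P j \<inter> T)" if j: "j < r" for j
  proof (rule cl_card[OF mat fin])
    show "P j \<inter> T \<in> M" using P j unfolding kpart_def by (auto intro: matroid_sub[OF mat])
    show "J \<in> M" by fact
    fix z assume "z \<in> J" then show "z \<in> P j \<inter> T \<or> insert z (P j \<inter> T) \<notin> M"
      using R3 j unfolding J_def by auto
  qed
  then have "r * card J \<le> (\<Sum>j<r. card (P j \<inter> T))"
    using sum_mono[of "{..<r}" "\<lambda>_. card J" "\<lambda>j. card (P j \<inter> T)"] by simp
  also have "\<dots> = card (I \<inter> T)" using part_card[OF mat fin P] by simp
  also have "\<dots> < card (insert x (I \<inter> T))" using x fI by simp
  also have "\<dots> \<le> card T" using R1 fT by (intro card_mono) auto
  finally show ?thesis using TS R1 JM Tcl by blast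
qed

lemma kunion_matroid:
  assumes mat: "matroid N M" and fin: "finite N"
  shows "matroid N (kunion M k)"
  unfolding matroid_def
proof (intro conjI ballI allI impI)
  fix I assume "I \<in> kunion M k"
  then show "I \<subseteq> N" using mat unfolding kunion_def partitionable_def matroid_def by blast
next
  have "{} \<in> M" using mat unfolding matroid_def by auto
  then show "{} \<in> kunion M k" unfolding kunion_def partitionable_def by (intro CollectI exI[of _ "\<lambda>_. {}"]) auto
next
  fix I J assume "J \<in> kunion M k" "I \<subseteq> J"
  then obtain P where P: "kpart M k P J" unfolding kunion_def partitionable_part by auto
  have "kpart M k (\<lambda>i. P i \<inter> I) I" using P \<open>I \<subseteq> J\<close> unfolding kpart_def
    by (auto intro: matroid_sub[OF mat]) blast
  then show "I \<in> kunion M k" unfolding kunion_def partitionable_part by auto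
next
  fix I1 I2 assume I1: "I1 \<in> kunion M k" and I2: "I2 \<in> kunion M k" and c: "card I1 < card I2"
  show "\<exists>x\<in>I2 - I1. insert x I1 \<in> kunion M k"
  proof (rule ccontr)
    assume na: "\<not> ?thesis"
    obtain P where P: "kpart M k P I1" using I1 unfolding kunion_def partitionable_part by auto
    obtain Q where Q: "kpart M k Q I2" using I2 unfolding kunion_def partitionable_part by auto
    have fI1: "finite I1" using part_fin[OF mat fin P] .
    have fI2: "finite I2" using part_fin[OF mat fin Q] .
    define T where "T = {z. \<exists>x\<in>I2 - I1. \<exists>m ys. ys 0 = x \<and> (\<forall>i<m. edge M k P (ys i) (ys (Suc i))) \<and> ys m = z}"
    have np: "\<forall>x\<in>I2 - I1. \<not> partitionable M k (insert x I1)" using na unfolding kunion_def by auto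
    note R = reach[OF mat fin P _ np T_def]
    have R1: "I2 - I1 \<subseteq> T" and R2: "T \<subseteq> (I2 - I1) \<union> I1" and R3: "\<forall>j<k. \<forall>z\<in>T. z \<in> P j \<or> insert z (P j \<inter> T) \<notin> M"
      using R by auto
    have le: "card (Q j \<inter> T) \<le> card (P j \<inter> T)" if j: "j < k" for j
    proof (rule cl_card[OF mat fin])
      show "P j \<inter> T \<in> M" using P j unfolding kpart_def by (auto intro: matroid_sub[OF mat])
      show "Q j \<inter> T \<in> M" using Q j unfolding kpart_def by (auto intro: matroid_sub[OF mat])
      fix z assume "z \<in> Q j \<inter> T" then show "z \<in> P j \<inter> T \<or> insert z (P j \<inter> T) \<notin> M"
        using R3 j by auto
    qed
    have "card (I2 \<inter> T) \<le> (\<Sum>j<k. card (Q j \<inter> T))" using part_card_le[OF Q] .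
    also have "\<dots> \<le> (\<Sum>j<k. card (P j \<inter> T))" using le by (intro sum_mono) auto
    also have "\<dots> = card (I1 \<inter> T)" using part_card[OF mat fin P] by simp
    finally have ct: "card (I2 \<inter> T) \<le> card (I1 \<inter> T)" .
    have e2: "I2 \<inter> T = (I2 - I1) \<union> (I1 \<inter> I2 \<inter> T)" using R1 by auto
    have e1: "I1 \<inter> T = (I1 \<inter> I2 \<inter> T) \<union> ((I1 - I2) \<inter> T)" by auto
    have "card (I2 \<inter> T) = card (I2 - I1) + card (I1 \<inter> I2 \<inter> T)"
      unfolding e2 using fI1 fI2 by (intro card_Un_disjoint) auto
    moreover have "card (I1 \<inter> T) = card (I1 \<inter> I2 \<inter> T) + card ((I1 - I2) \<inter> T)"
      unfolding e1 using fI1 fI2 by (intro card_Un_disjoint) auto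
    moreover have "card ((I1 - I2) \<inter> T) \<le> card (I1 - I2)" using fI1 by (intro card_mono) auto
    ultimately have "card (I2 - I1) \<le> card (I1 - I2)" using ct by linarith
    moreover have "card I1 = card (I1 \<inter> I2) + card (I1 - I2)" "card I2 = card (I1 \<inter> I2) + card (I2 - I1)"
      using fI1 fI2 card_Int_Diff[of I1 I2] card_Int_Diff[of I2 I1] by (auto simp: Int_commute)
    ultimately show False using c by linarith
  qed
qed


definition optP :: "('a \<Rightarrow> real) \<Rightarrow> 'a set set \<Rightarrow> 'a set \<Rightarrow> bool" where
  "optP w F S \<longleftrightarrow> S \<in> F \<and> (\<forall>T\<in>F. set_weight w T \<le> set_weight w S) \<and> (\<forall>T\<in>F. S \<subseteq> T \<longrightarrow> T = S)"

lemma opt_card_eq: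
  assumes mat: "matroid N F" and "optP w F S1" "optP w F S2"
  shows "card S1 \<le> card S2"
proof (rule ccontr)
  assume "\<not> ?thesis"
  then obtain x where "x \<in> S1 - S2" "insert x S2 \<in> F"
    using matroid_aug[OF mat, of S2 S1] assms unfolding optP_def by auto
  then show False using assms(3) unfolding optP_def by auto
qed

lemma uniq_aux:
  assumes mat: "matroid N F" and fin: "finite N" and inj: "inj_on w N"
    and S1: "optP w F S1" and S2: "optP w F S2" and e: "e \<in> S1 - S2"
    and emax: "\<forall>d\<in>(S1 - S2) \<union> (S2 - S1). w d \<le> w e"
  shows False
proof -
  have S1F: "S1 \<in> F" and S2F: "S2 \<in> F" using S1 S2 unfolding optP_def by auto
  have fS1: "finite S1" and fS2: "finite S2" using matroid_fin[OF mat fin] S1F S2F by auto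
  have ceq: "card S1 = card S2" using opt_card_eq[OF mat S1 S2] opt_card_eq[OF mat S2 S1] by simp
  have AF: "insert e (S1 \<inter> S2) \<in> F" using e S1F by (intro matroid_sub[OF mat S1F]) auto
  have "card (insert e (S1 \<inter> S2)) \<le> card S2" using ceq fS1 e by (metis card_mono DiffD1 Int_lower1 insert_subset)
  then obtain B where B: "B \<in> F" "insert e (S1 \<inter> S2) \<subseteq> B" "B \<subseteq> insert e (S1 \<inter> S2) \<union> S2" "card B = card S2"
    using extend[OF mat fin AF S2F] by blast
  have "card (insert e S2) = Suc (card S2)" using fS2 e by simp
  then have "\<not> insert e S2 \<subseteq> B" using B(4) fS2
    by (metis B(1) card_mono finite_insert lessI matroid_fin[OF mat fin] not_le)
  then obtain f where f: "f \<in> insert e S2" "f \<notin> B" by blast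
  have fe: "f \<noteq> e" using f B(2) by auto
  have fS2': "f \<in> S2" using f fe by auto
  have fS1': "f \<notin> S1" using f B(2) fS2' by auto
  have "B \<subseteq> insert e S2 - {f}" using B(3) f(2) by auto
  moreover have "card (insert e S2 - {f}) = card S2" using fS2 e fS2' by simp
  ultimately have Beq: "B = insert e S2 - {f}" using B(4) fS2 by (intro card_subset_eq) auto
  have "set_weight w B = w e + set_weight w S2 - w f"
    unfolding Beq set_weight_def using fS2 e fS2' by (simp add: sum_diff1)
  moreover have "w f < w e"
  proof -
    have "w f \<le> w e" using emax fS2' fS1' by auto
    moreover have "w f \<noteq> w e"
    proof -
      have "S1 \<subseteq> N" "S2 \<subseteq> N" using S1F S2F mat unfolding matroid_def by auto
      then show ?thesis using inj fe fS2' e unfolding inj_on_def by blast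
    qed
    ultimately show ?thesis by simp
  qed
  ultimately have "set_weight w B > set_weight w S2" by simp
  then show False using S2 B(1) unfolding optP_def by fastforce
qed

lemma OPT_in:
  assumes mat: "matroid N F" and fin: "finite N" and inj: "inj_on w N" and nn: "\<forall>x\<in>N. w x \<ge> 0"
  shows "OPT w F \<in> F"
proof -
  have FN: "F \<subseteq> Pow N" using mat unfolding matroid_def by auto
  have fF: "finite F" using FN fin by (meson finite_Pow_iff finite_subset)
  have neF: "F \<noteq> {}" using mat unfolding matroid_def by auto
  define W where "W = Max (set_weight w ` F)"
  define G where "G = {S\<in>F. set_weight w S = W}"
  have "W \<in> set_weight w ` F" unfolding W_def using fF neF by (intro Max_in) auto
  then have neG: "G \<noteq> {}" unfolding G_def by auto
  have fG: "finite G" using fF unfolding G_def by auto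
  obtain S where S: "S \<in> G" "card S = Max (card ` G)" using Max_in[of "card ` G"] fG neG by (metis (mono_tags, lifting) empty_is_image finite_imageI imageE)
  have Wmax: "set_weight w T \<le> W" if "T \<in> F" for T unfolding W_def using fF that by simp
  have ex: "optP w F S"
    unfolding optP_def
  proof (intro conjI ballI impI)
    show "S \<in> F" using S unfolding G_def by auto
    fix T assume T: "T \<in> F"
    show "set_weight w T \<le> set_weight w S" using S Wmax[OF T] unfolding G_def by auto
    assume ST: "S \<subseteq> T"
    have TN: "T \<subseteq> N" using T FN by auto
    have fT: "finite T" using TN fin finite_subset by auto
    have "set_weight w T = set_weight w S + set_weight w (T - S)"
      unfolding set_weight_def using sum.subset_diff[OF ST fT] by (simp add: add.commute)
    moreover have "set_weight w (T - S) \<ge> 0" unfolding set_weight_def using nn TN by (intro sum_nonneg) auto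
    ultimately have "set_weight w T \<ge> W" using S unfolding G_def by auto
    then have "T \<in> G" using Wmax[OF T] T unfolding G_def by auto
    then have "card T \<le> card S" using S fG by simp
    then show "T = S" using ST fT by (metis card_mono card_subset_eq le_antisym)
  qed
  have un: "S' = S" if "optP w F S'" for S'
  proof (rule ccontr)
    assume ne: "S' \<noteq> S"
    define D where "D = (S' - S) \<union> (S - S')"
    have "finite S" "finite S'" using ex that matroid_fin[OF mat fin] unfolding optP_def by auto
    then have fD: "finite D" unfolding D_def by auto
    have neD: "D \<noteq> {}" unfolding D_def using ne by auto
    obtain e where e: "e \<in> D" "w e = Max (w ` D)" using Max_in[of "w ` D"] fD neD by (metis (mono_tags, lifting) empty_is_image finite_imageI imageE)
    have emax: "\<forall>d\<in>D. w d \<le> w e" using e fD by simp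
    show False
    proof (cases "e \<in> S' - S")
      case True
      then show False using uniq_aux[OF mat fin inj that ex True] emax unfolding D_def by auto
    next
      case False
      then have "e \<in> S - S'" using e unfolding D_def by auto
      then show False using uniq_aux[OF mat fin inj ex that] emax unfolding D_def by auto
    qed
  qed
  have "OPT w F = (THE S. optP w F S)" unfolding OPT_def optP_def by simp
  moreover have "optP w F (THE S. optP w F S)" using ex un by (rule theI)
  ultimately have "optP w F (OPT w F)" by (simp only:)
  then show ?thesis unfolding optP_def by (elim conjE)
qed



lemma pair_expect:
  fixes p c :: real
  assumes p: "0 \<le> p" "p \<le> 1/2"
  shows "measure_pmf.expectation (pair_pmf (bernoulli_pmf (2 * p)) (bernoulli_pmf (1/2)))
           (\<lambda>v. if fst v \<and> snd v then c else 1) = 1 + p * (c - 1)"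
proof -
  have "measure_pmf.expectation (pair_pmf (bernoulli_pmf (2 * p)) (bernoulli_pmf (1/2)))
           (\<lambda>v. if fst v \<and> snd v then c else 1) =
        (\<Sum>a\<in>UNIV. (if fst a \<and> snd a then c else 1) * pmf (pair_pmf (bernoulli_pmf (2 * p)) (bernoulli_pmf (1/2))) a)"
    by (rule integral_measure_pmf_real) auto
  also have "\<dots> = 1 + p * (c - 1)"
    using p by (simp add: UNIV_Times_UNIV[symmetric] UNIV_bool pmf_pair del: UNIV_Times_UNIV) (simp add: algebra_simps)
  finally show ?thesis .
qed

lemma chernoff:
  fixes A :: "nat set" and p l K a :: real
  assumes A: "A \<subseteq> {1..n}" and p: "0 \<le> p" "p \<le> 1/2" and l: "0 \<le> l" "l \<le> 1" and K: "real (card A) \<le> K"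
  shows "measure_pmf.prob
       (Pi_pmf {1..n} (False, False) (\<lambda>_. pair_pmf (bernoulli_pmf (2 * p)) (bernoulli_pmf (1/2))))
       {\<omega>. a \<le> real (card {i\<in>A. fst (\<omega> i) \<and> snd (\<omega> i)})} \<le> exp (p * (l + l\<^sup>2) * K - l * a)"
proof -
  define Q where "Q = pair_pmf (bernoulli_pmf (2 * p)) (bernoulli_pmf (1/2))"
  define \<Omega> where "\<Omega> = Pi_pmf {1..n} (False, False) (\<lambda>_. Q)"
  define f where "f = (\<lambda>\<omega>::nat \<Rightarrow> bool \<times> bool. exp (l * real (card {i\<in>A. fst (\<omega> i) \<and> snd (\<omega> i)})))"
  define h where "h = (\<lambda>i (v::bool\<times>bool). if i \<in> A then (if fst v \<and> snd v then exp l else 1) else (1::real))"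
  have fA: "finite A" using A finite_subset by blast
  have fprod: "f \<omega> = (\<Prod>i\<in>{1..n}. h i (\<omega> i))" for \<omega>
  proof -
    have "(\<Prod>i\<in>{1..n}. h i (\<omega> i)) = (\<Prod>i\<in>A. (if fst (\<omega> i) \<and> snd (\<omega> i) then exp l else 1))"
      unfolding h_def using A by (subst prod.inter_filter[symmetric]) (auto intro!: prod.cong)
    also have "\<dots> = (\<Prod>i\<in>{i\<in>A. fst (\<omega> i) \<and> snd (\<omega> i)}. exp l)"
      using fA by (subst prod.inter_filter) auto
    also have "\<dots> = f \<omega>" unfolding f_def by (simp add: exp_of_nat_mult[symmetric] mult.commute)
    finally show ?thesis by simp
  qed
  have Eh: "measure_pmf.expectation Q (h i) = (if i \<in> A then 1 + p * (exp l - 1) else 1)" for i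
    unfolding h_def Q_def using pair_expect[OF p, of "exp l"] by auto
  have "measure_pmf.expectation \<Omega> f = measure_pmf.expectation \<Omega> (\<lambda>\<omega>. \<Prod>i\<in>{1..n}. h i (\<omega> i))"
    using fprod by (metis (no_types, lifting) ext)
  also have "\<dots> = (\<Prod>i\<in>{1..n}. measure_pmf.expectation Q (h i))"
    unfolding \<Omega>_def
    by (rule expectation_prod_Pi_pmf) (auto simp: h_def intro!: integrable_measure_pmf_finite)
  also have "\<dots> = (\<Prod>i\<in>{1..n}. if i \<in> A then 1 + p * (exp l - 1) else 1)" using Eh by simp
  also have "\<dots> = (1 + p * (exp l - 1)) ^ card A"
  proof -
    have "{x\<in>{1..n}. x \<in> A} = A" using A by auto
    then show ?thesis by (subst prod.inter_filter[symmetric]) auto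
  qed
  also have "\<dots> \<le> exp (p * (exp l - 1)) ^ card A"
  proof (rule power_mono)
    show "1 + p * (exp l - 1) \<le> exp (p * (exp l - 1))" by (rule exp_ge_add_one_self)
    show "0 \<le> 1 + p * (exp l - 1)" using p l by (simp add: add_nonneg_nonneg)
  qed
  also have "\<dots> = exp (p * (exp l - 1) * real (card A))" by (simp add: exp_of_nat_mult[symmetric] mult.commute)
  also have "\<dots> \<le> exp (p * (l + l\<^sup>2) * K)"
  proof -
    have "exp l - 1 \<le> l + l\<^sup>2" using exp_bound[OF l] by simp
    moreover have "0 \<le> exp l - 1" using l by simp
    ultimately have "p * (exp l - 1) * real (card A) \<le> p * (l + l\<^sup>2) * K"
      using p K by (intro mult_mono) (auto intro: mult_left_mono)
    then show ?thesis by simp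
  qed
  finally have E: "measure_pmf.expectation \<Omega> f \<le> exp (p * (l + l\<^sup>2) * K)" .
  have "measure_pmf.prob \<Omega> {\<omega>. a \<le> real (card {i\<in>A. fst (\<omega> i) \<and> snd (\<omega> i)})}
      \<le> measure_pmf.prob \<Omega> {\<omega>\<in>space (measure_pmf \<Omega>). exp (l * a) \<le> f \<omega>}"
    unfolding f_def using l by (intro measure_pmf.finite_measure_mono) (auto intro: mult_left_mono)
  also have "\<dots> \<le> measure_pmf.expectation \<Omega> f / exp (l * a)"
  proof (rule integral_Markov_inequality_measure)
    show "integrable (measure_pmf \<Omega>) f"
    proof (rule measure_pmf.integrable_const_bound[where B="exp (l * real (card A))"])
      show "AE x in measure_pmf \<Omega>. norm (f x) \<le> exp (l * real (card A))"
        unfolding f_def using l fA by (intro AE_pmfI) (auto intro!: mult_left_mono card_mono)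
      show "f \<in> borel_measurable (measure_pmf \<Omega>)" by simp
    qed
  qed (auto simp: f_def)
  also have "\<dots> \<le> exp (p * (l + l\<^sup>2) * K) / exp (l * a)"
    using E by (intro divide_right_mono) auto
  also have "\<dots> = exp (p * (l + l\<^sup>2) * K - l * a)" by (simp add: exp_diff)
  finally show ?thesis unfolding \<Omega>_def Q_def .
qed



lemma sum_pow_card:
  fixes x :: real
  shows "finite A \<Longrightarrow> (\<Sum>J\<in>Pow A. x ^ card J) = (1 + x) ^ card A"
proof (induction A rule: finite_induct)
  case empty
  then show ?case by simp
next
  case (insert a A)
  have "Pow (insert a A) = Pow A \<union> insert a ` Pow A" by (rule Pow_insert)
  moreover have "Pow A \<inter> insert a ` Pow A = {}" using insert by auto
  ultimately have "(\<Sum>J\<in>Pow (insert a A). x ^ card J) = (\<Sum>J\<in>Pow A. x ^ card J) + (\<Sum>J\<in>insert a ` Pow A. x ^ card J)"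
    using insert by (simp add: sum.union_disjoint)
  also have "(\<Sum>J\<in>insert a ` Pow A. x ^ card J) = (\<Sum>J\<in>Pow A. x ^ card (insert a J))"
  proof (rule sum.reindex_cong[where l="insert a"])
    show "inj_on (insert a) (Pow A)" using insert unfolding inj_on_def by (metis Pow_iff insert_ident subsetD)
  qed auto
  also have "\<dots> = (\<Sum>J\<in>Pow A. x * x ^ card J)"
  proof (intro sum.cong refl)
    fix J assume "J \<in> Pow A"
    then have "finite J" "a \<notin> J" using insert finite_subset by auto
    then show "x ^ card (insert a J) = x * x ^ card J" by simp
  qed
  also have "\<dots> = x * (1 + x) ^ card A" using insert(3) by (simp add: sum_distrib_left[symmetric])
  finally show ?case using insert by (simp add: algebra_simps)
qed

lemma final_sum:
  fixes n :: nat
  assumes n: "n \<ge> 2"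
  shows "(1 + 1 / real n ^ 6) ^ n - 1 \<le> 1 / real n ^ 3"
proof -
  define r where "r = real n"
  have r2: "r \<ge> 2" using n unfolding r_def by simp
  define x where "x = 1 / r ^ 6"
  have x0: "0 \<le> x" unfolding x_def using r2 by simp
  have r5: "r ^ 5 \<ge> 1" using r2 by (intro one_le_power) simp
  have nx: "r * x = 1 / r ^ 5" unfolding x_def using r2 by (simp add: field_simps eval_nat_numeral)
  have nx1: "r * x \<le> 1" unfolding nx using r5 r2 by (simp add: divide_le_eq_1)
  have "(1 + x) ^ n \<le> exp x ^ n" using x0 by (intro power_mono) auto
  also have "\<dots> = exp (r * x)" unfolding r_def by (simp add: exp_of_nat_mult[symmetric])
  also have "\<dots> \<le> 1 + r * x + (r * x)\<^sup>2"
    by (rule exp_bound) (use x0 r2 nx1 in auto)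
  finally have "(1 + x) ^ n - 1 \<le> r * x + (r * x)\<^sup>2" by simp
  also have "\<dots> \<le> 2 * (r * x)"
  proof -
    have "0 \<le> r * x" using x0 r2 by simp
    then have "(r * x) * (r * x) \<le> (r * x) * 1" using nx1 by (intro mult_left_mono) auto
    then have "(r * x)\<^sup>2 \<le> r * x" by (simp add: power2_eq_square)
    then show ?thesis by simp
  qed
  also have "\<dots> = 2 / r ^ 5" unfolding nx by simp
  also have "\<dots> \<le> 1 / r ^ 3"
  proof -
    have "r ^ 5 = r ^ 3 * r ^ 2" by (simp add: power_add[symmetric])
    moreover have "r ^ 2 \<ge> 2" using r2 unfolding power2_eq_square by (smt (verit) mult_le_cancel_left1)
    moreover have "r ^ 3 > 0" using r2 by simp
    ultimately have "2 * r ^ 3 \<le> r ^ 5" by (metis mult.commute mult_left_mono less_imp_le)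
    then show ?thesis using \<open>r ^ 3 > 0\<close> by (simp add: field_simps)
  qed
  finally show ?thesis unfolding x_def r_def .
qed

lemma ln2: "1/2 \<le> ln (2::real)"
proof -
  have "exp (1/2::real) \<le> 1 + 1/2 + (1/2)\<^sup>2" by (rule exp_bound) auto
  also have "\<dots> \<le> 2" by (simp add: power2_eq_square)
  finally show ?thesis by (subst ln_ge_iff) auto
qed



theorem lemma2:
  "\<exists>C0::real. \<forall>C\<ge>C0. \<forall>(n::nat) (k::nat) (M::nat set set) (w::nat \<Rightarrow> real) (p::real).
     n \<ge> 1 \<longrightarrow> matroid {1..n} M \<longrightarrow>
     (\<forall>i\<in>{1..n}. w i \<ge> 0) \<longrightarrow>
     (\<forall>i\<in>{1..n}. \<forall>j\<in>{1..n}. i < j \<longrightarrow> w i > w j) \<longrightarrow>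
     k \<ge> 1 \<longrightarrow> 160\<^sup>2 * ln (real n) \<le> real k \<longrightarrow> k \<le> n \<longrightarrow>
     (\<exists>m::nat. m \<ge> 1 \<and> ln (1 / eps C n (real k)) - 2 = real m) \<longrightarrow>
     eps C n (real k) \<le> p \<longrightarrow> p \<le> 1/2 \<longrightarrow>
     measure_pmf.prob
       (Pi_pmf {1..n} (False, False)
          (\<lambda>_. pair_pmf (bernoulli_pmf (2 * p)) (bernoulli_pmf (1/2))))
       {\<omega>. real (covering_number
               ({i\<in>{1..n}. fst (\<omega> i) \<and> snd (\<omega> i)} \<inter> OPT w (kunion M k)) M)
             \<ge> (1 + eps C n (p * real k)) * p * real k}
     \<le> 1 / real n ^ 3"
proof (intro exI[of _ 10] allI impI)
  fix C :: real and n k :: nat and M :: "nat set set" and w :: "nat \<Rightarrow> real" and p :: real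
  assume C: "10 \<le> C" and n1: "n \<ge> 1" and mat: "matroid {1..n} M" and wnn: "\<forall>i\<in>{1..n}. w i \<ge> 0"
    and wdec: "\<forall>i\<in>{1..n}. \<forall>j\<in>{1..n}. i < j \<longrightarrow> w i > w j" and k1: "k \<ge> 1"
    and kL: "160\<^sup>2 * ln (real n) \<le> real k" and kn: "k \<le> n"
    and mm: "\<exists>m::nat. m \<ge> 1 \<and> ln (1 / eps C n (real k)) - 2 = real m"
    and pe: "eps C n (real k) \<le> p" and ph: "p \<le> 1/2"
  define \<Omega> where "\<Omega> = Pi_pmf {1..n} (False, False) (\<lambda>_. pair_pmf (bernoulli_pmf (2 * p)) (bernoulli_pmf (1/2)))"
  define B where "B = OPT w (kunion M k)"
  define t where "t = (1 + eps C n (p * real k)) * p * real k"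
  define E where "E = {\<omega>. real (covering_number ({i\<in>{1..n}. fst (\<omega> i) \<and> snd (\<omega> i)} \<inter> B) M) \<ge> t}"
  have goal: "measure_pmf.prob \<Omega> E \<le> 1 / real n ^ 3"
  proof (cases "n = 1")
    case True
    then show ?thesis using measure_pmf.prob_le_1[of \<Omega> E] by simp
  next
    case False
    then have n2: "n \<ge> 2" using n1 by simp
    define L where "L = ln (real n)"
    have L2: "L \<ge> 1/2"
    proof -
      have "ln 2 \<le> L" unfolding L_def using n2 by (subst ln_le_cancel_iff) auto
      then show ?thesis using ln2 by simp
    qed
    have kpos: "real k > 0" using k1 by simp
    define e1 where "e1 = eps C n (real k)"
    have e1def: "e1 = C * sqrt (L / real k)" unfolding e1_def eps_def L_def by simp
    have e1sq: "e1\<^sup>2 = C\<^sup>2 * (L / real k)" unfolding e1def using L2 kpos by (simp add: power_mult_distrib)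
    have e1pos: "e1 > 0" unfolding e1def using C L2 kpos by simp
    define \<mu> where "\<mu> = p * real k"
    have mupos: "\<mu> > 0" unfolding \<mu>_def using pe e1pos kpos unfolding e1_def by simp
    have "4 * C\<^sup>2 * L \<le> real k"
    proof -
      have "e1\<^sup>2 \<le> (1/2)\<^sup>2" using pe ph e1pos unfolding e1_def by (intro power_mono) auto
      then have "C\<^sup>2 * (L / real k) \<le> 1/4" using e1sq by (simp add: power2_eq_square)
      then show ?thesis using kpos by (simp add: field_simps)
    qed
    then have kbig: "4 * C\<^sup>2 * L \<le> real k" .
    have mubig: "2 * C\<^sup>2 * L \<le> \<mu>"
    proof -
      have "e1 * real k \<le> \<mu>" unfolding \<mu>_def using pe kpos unfolding e1_def by (intro mult_right_mono) auto
      then have "(e1 * real k)\<^sup>2 \<le> \<mu>\<^sup>2" using e1pos kpos by (intro power_mono) auto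
      have eq: "(e1 * real k)\<^sup>2 = C\<^sup>2 * L * real k"
      proof -
        have "(e1 * real k)\<^sup>2 = e1\<^sup>2 * (real k * real k)" by (simp add: power_mult_distrib power2_eq_square)
        also have "\<dots> = C\<^sup>2 * L * real k" unfolding e1sq using kpos by (simp add: field_simps)
        finally show ?thesis .
      qed
      have "(2 * C\<^sup>2 * L)\<^sup>2 = C\<^sup>2 * L * (4 * C\<^sup>2 * L)" by (simp add: power2_eq_square algebra_simps)
      also have "\<dots> \<le> C\<^sup>2 * L * real k" using kbig L2 by (intro mult_left_mono) auto
      also have "\<dots> \<le> \<mu>\<^sup>2" using eq \<open>(e1 * real k)\<^sup>2 \<le> \<mu>\<^sup>2\<close> by simp
      finally have "(2 * C\<^sup>2 * L)\<^sup>2 \<le> \<mu>\<^sup>2" .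
      then show ?thesis using power2_le_imp_le[of "2 * C\<^sup>2 * L" \<mu>] mupos by simp
    qed
    define e2 where "e2 = eps C n \<mu>"
    have e2def: "e2 = C * sqrt (L / \<mu>)" unfolding e2_def eps_def L_def by simp
    have e2nn: "e2 \<ge> 0" unfolding e2def using C L2 mupos by simp
    have e2sq: "\<mu> * e2\<^sup>2 = C\<^sup>2 * L" unfolding e2def using L2 mupos by (simp add: power_mult_distrib)
    have e2le1: "e2 \<le> 1"
    proof -
      have "C\<^sup>2 * L \<ge> 0" using L2 by simp
      then have "\<mu> * e2\<^sup>2 \<le> \<mu> * 1" using e2sq mubig by simp
      then have "e2\<^sup>2 \<le> 1\<^sup>2" using mupos by simp
      then show ?thesis using power2_le_imp_le[of e2 1] by simp
    qed
    have tdef: "t = (1 + e2) * \<mu>" unfolding t_def e2_def \<mu>_def by simp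
    have fN: "finite {1..n}" by simp
    have kmat: "matroid {1..n} (kunion M k)" using kunion_matroid[OF mat fN] .
    have inj: "inj_on w {1..n}" unfolding inj_on_def
    proof (intro ballI impI)
      fix x y assume xy: "x \<in> {1..n}" "y \<in> {1..n}" "w x = w y"
      show "x = y"
      proof (rule ccontr)
        assume "x \<noteq> y"
        then have "x < y \<or> y < x" by auto
        then show False using wdec xy by force
      qed
    qed
    have BK: "B \<in> kunion M k" unfolding B_def using OPT_in[OF kmat fN inj] wnn by auto
    obtain Q where Q: "kpart M k Q B" using BK unfolding kunion_def partitionable_part by auto
    have BN: "B \<subseteq> {1..n}" using kmat BK unfolding matroid_def by auto
    have fB: "finite B" using BN finite_subset by auto
    define cl where "cl J = {z. z \<in> J \<or> insert z J \<notin> M}" for J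
    define Jset where "Jset = {J. J \<in> M \<and> J \<noteq> {}}"
    define Ev where "Ev J = {\<omega>. (t - 1) * real (card J) \<le> real (card {i \<in> B \<inter> cl J. fst (\<omega> i) \<and> snd (\<omega> i)})}" for J
    have MN: "J \<subseteq> {1..n}" if "J \<in> M" for J using mat that unfolding matroid_def by auto
    have JsetP: "Jset \<subseteq> Pow {1..n} - {{}}" unfolding Jset_def using MN by auto
    have fJ: "finite Jset" using JsetP by (meson finite_Diff finite_Pow_iff fN finite_subset)
    have t100: "t \<ge> 100"
    proof -
      have "t \<ge> \<mu>" unfolding tdef using e2nn mupos by (simp add: algebra_simps)
      moreover have "2 * C\<^sup>2 * L \<ge> 2 * 10\<^sup>2 * (1/2)"
        using C L2 by (intro mult_mono power_mono) auto
      ultimately show ?thesis using mubig by (simp add: mult.commute)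
    qed
    have incl: "E \<subseteq> (\<Union>J\<in>Jset. Ev J)"
    proof
      fix \<omega> assume "\<omega> \<in> E"
      define Sp where "Sp = {i\<in>{1..n}. fst (\<omega> i) \<and> snd (\<omega> i)} \<inter> B"
      define \<phi> where "\<phi> = covering_number Sp M"
      have tle: "t \<le> real \<phi>" using \<open>\<omega> \<in> E\<close> unfolding E_def Sp_def \<phi>_def by simp
      have SpB: "Sp \<subseteq> B" unfolding Sp_def by auto
      have SpN: "Sp \<subseteq> {1..n}" using SpB BN by auto
      have "Sp \<in> kunion M k" using matroid_sub[OF kmat BK SpB] .
      then have pk: "partitionable M k Sp" unfolding kunion_def by simp
      have phi2: "\<phi> \<ge> 2" using tle t100 by simp
      define r where "r = \<phi> - 1"
      have r1: "r \<ge> 1" unfolding r_def using phi2 by simp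
      have npr: "\<not> partitionable M r Sp"
      proof
        assume "partitionable M r Sp"
        then have "\<phi> \<le> r" unfolding \<phi>_def covering_number_def by (rule Least_le)
        then show False unfolding r_def using phi2 by simp
      qed
      obtain T J where TJ: "T \<subseteq> Sp" "T \<noteq> {}" "J \<in> M" "\<forall>z\<in>T. z \<in> J \<or> insert z J \<notin> M" "card T > r * card J"
        using covering[OF mat fN SpN npr r1] by blast
      have Jne: "J \<noteq> {}"
      proof
        assume J0: "J = {}"
        obtain z where z: "z \<in> T" using TJ(2) by auto
        then have "z \<in> B" using TJ(1) SpB by auto
        then obtain i where i: "i < k" "z \<in> Q i" using Q unfolding kpart_def by auto
        then have "{z} \<in> M" using Q unfolding kpart_def by (auto intro: matroid_sub[OF mat])
        then show False using TJ(4) z J0 by auto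
      qed
      have Tsub: "T \<subseteq> {i \<in> B \<inter> cl J. fst (\<omega> i) \<and> snd (\<omega> i)}"
        using TJ(1,4) unfolding Sp_def cl_def by auto
      have "card T \<le> card {i \<in> B \<inter> cl J. fst (\<omega> i) \<and> snd (\<omega> i)}"
        using fB by (intro card_mono[OF _ Tsub]) auto
      moreover have "(t - 1) * real (card J) \<le> real r * real (card J)"
      proof -
        have "real r = real \<phi> - 1" unfolding r_def using phi2 by simp
        then have "t - 1 \<le> real r" using tle by simp
        then show ?thesis by (intro mult_right_mono) auto
      qed
      moreover have "real r * real (card J) < real (card T)" using TJ(5) by (metis of_nat_less_iff of_nat_mult)
      ultimately have "\<omega> \<in> Ev J" unfolding Ev_def by simp
      moreover have "J \<in> Jset" unfolding Jset_def using TJ(3) Jne by simp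
      ultimately show "\<omega> \<in> (\<Union>J\<in>Jset. Ev J)" by blast
    qed
    have p0: "0 \<le> p" using pe e1pos unfolding e1_def by simp
    have pEv: "measure_pmf.prob \<Omega> (Ev J) \<le> (1 / real n ^ 6) ^ card J" if J: "J \<in> Jset" for J
    proof -
      define l where "l = e2 / 2"
      have JM: "J \<in> M" using J unfolding Jset_def by simp
      have A: "B \<inter> cl J \<subseteq> {1..n}" using BN by auto
      have "card (B \<inter> cl J) \<le> (\<Sum>j<k. card (Q j \<inter> cl J))" by (rule part_card_le[OF Q])
      also have "\<dots> \<le> (\<Sum>j<k. card J)"
      proof (rule sum_mono)
        fix j assume "j \<in> {..<k}"
        then have "Q j \<in> M" using Q unfolding kpart_def by auto
        then have "Q j \<inter> cl J \<in> M" by (rule matroid_sub[OF mat]) auto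
        then show "card (Q j \<inter> cl J) \<le> card J"
          by (rule cl_card[OF mat fN JM]) (auto simp: cl_def)
      qed
      finally have "card (B \<inter> cl J) \<le> k * card J" by simp
      then have cardA: "real (card (B \<inter> cl J)) \<le> real k * real (card J)" by (metis of_nat_le_iff of_nat_mult)
      have "measure_pmf.prob \<Omega> (Ev J) \<le> exp (p * (l + l\<^sup>2) * (real k * real (card J)) - l * ((t - 1) * real (card J)))"
        unfolding \<Omega>_def Ev_def by (rule chernoff[OF A p0 ph _ _ cardA]) (use e2nn e2le1 in \<open>auto simp: l_def\<close>)
      also have "p * (l + l\<^sup>2) * (real k * real (card J)) - l * ((t - 1) * real (card J))
                 = real (card J) * (- (\<mu> * e2\<^sup>2) / 4 + e2 / 2)"
        unfolding l_def tdef \<mu>_def by (simp add: algebra_simps power2_eq_square)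
      also have "\<mu> * e2\<^sup>2 = C\<^sup>2 * L" by (rule e2sq)
      also have "exp (real (card J) * (- (C\<^sup>2 * L) / 4 + e2 / 2)) \<le> exp (real (card J) * (- 6 * L))"
      proof -
        have "C\<^sup>2 \<ge> 10\<^sup>2" using C by (intro power_mono) auto
        then have "C\<^sup>2 * L \<ge> 100 * L" using L2 by (intro mult_right_mono) auto
        then have "- (C\<^sup>2 * L) / 4 + e2 / 2 \<le> - 6 * L" using e2le1 L2 by linarith
        then show ?thesis by (intro iffD2[OF exp_le_cancel_iff] mult_left_mono) auto
      qed
      also have "exp (real (card J) * (- 6 * L)) = (1 / real n ^ 6) ^ card J"
      proof -
        have "exp (real (card J) * (- 6 * L)) = exp (- 6 * L) ^ card J" by (rule exp_of_nat_mult)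
        moreover have "exp (- 6 * L) = 1 / real n ^ 6"
        proof -
          have "exp (6 * L) = exp L ^ 6" using exp_of_nat_mult[of 6 L] by simp
          also have "exp L = real n" unfolding L_def using n1 by simp
          finally have "exp (6 * L) = real n ^ 6" .
          then show ?thesis by (simp add: exp_minus inverse_eq_divide)
        qed
        ultimately show ?thesis by simp
      qed
      finally show ?thesis .
    qed
    have "measure_pmf.prob \<Omega> E \<le> measure_pmf.prob \<Omega> (\<Union>J\<in>Jset. Ev J)"
      by (rule measure_pmf.finite_measure_mono[OF incl]) auto
    also have "\<dots> \<le> (\<Sum>J\<in>Jset. measure_pmf.prob \<Omega> (Ev J))"
      by (rule measure_pmf.finite_measure_subadditive_finite) (auto simp: fJ)
    also have "\<dots> \<le> (\<Sum>J\<in>Jset. (1 / real n ^ 6) ^ card J)" by (rule sum_mono) (rule pEv)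
    also have "\<dots> \<le> (\<Sum>J\<in>Pow {1..n} - {{}}. (1 / real n ^ 6) ^ card J)"
      by (rule sum_mono2) (use JsetP in auto)
    also have "\<dots> = (\<Sum>J\<in>Pow {1..n}. (1 / real n ^ 6) ^ card J) - 1"
      by (subst sum_diff1) auto
    also have "\<dots> = (1 + 1 / real n ^ 6) ^ n - 1" using sum_pow_card[of "{1..n}" "1 / real n ^ 6"] by simp
    also have "\<dots> \<le> 1 / real n ^ 3" by (rule final_sum[OF n2])
    finally show ?thesis .
  qed
  then show "measure_pmf.prob
       (Pi_pmf {1..n} (False, False)
          (\<lambda>_. pair_pmf (bernoulli_pmf (2 * p)) (bernoulli_pmf (1/2))))
       {\<omega>. real (covering_number
               ({i\<in>{1..n}. fst (\<omega> i) \<and> snd (\<omega> i)} \<inter> OPT w (kunion M k)) M)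
             \<ge> (1 + eps C n (p * real k)) * p * real k}
     \<le> 1 / real n ^ 3" unfolding \<Omega>_def E_def B_def t_def .
qed


end
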